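(* Let $k$ be a positive integer and $c > 0$. In any election, a committee $S$ of size $k$ is $c$-stable if and only if it is $\frac{c}{k}$-undominated.
   Context: An election consists of a finite set $V$ of $n$ voters, a finite set $C$ of candidates, and for each voter $v$ a strict linear order $\succ_v$ on $C$. A committee is a nonempty subset $S \subseteq C$. Voter $v$ strongly prefers committee $S'$ over committee $S$ (written $S' \succ_v S$) if $v$ prefers her favorite candidate in $S'$ over her favorite candidate in $S$; for a single candidate $a$, $a \succ_v S$ means $\{a\} \succ_v S$, i.e., $v$ prefers $a$ to every member of $S$. A committee $S$ of size $k$ is $c$-stable if for every committee $S'$ of size $k'$, the fraction of voters $v$ with $S' \succ_v S$ is less than $c \cdot \frac{k'}{k}$. A committee $S$ is $\alpha$-undominated if for every candidate $a \in C$, the fraction of voters $v$ with $a \succ_v S$ is less than $\alpha$. *)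

theory Defs
  imports Complex_Main
begin

text \<open>An election: finite nonempty voter set V, finite candidate set C, and for each
voter v a strict linear order P v on C, where (a,b) \<in> P v means v prefers a to b.\<close>

definition election :: "'v set \<Rightarrow> 'c set \<Rightarrow> ('v \<Rightarrow> ('c \<times> 'c) set) \<Rightarrow> bool" where
  "election V C P \<longleftrightarrow> finite V \<and> V \<noteq> {} \<and> finite C \<and>
     (\<forall>v\<in>V. P v \<subseteq> C \<times> C \<and> strict_linear_order_on C (P v))"

definition committee :: "'c set \<Rightarrow> 'c set \<Rightarrow> bool" where
  "committee C S \<longleftrightarrow> S \<noteq> {} \<and> S \<subseteq> C"

definition favorite :: "('c \<times> 'c) set \<Rightarrow> 'c set \<Rightarrow> 'c" where
  "favorite r S = (THE a. a \<in> S \<and> (\<forall>b\<in>S. b \<noteq> a \<longrightarrow> (a, b) \<in> r))"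

definition strongly_prefers :: "('c \<times> 'c) set \<Rightarrow> 'c set \<Rightarrow> 'c set \<Rightarrow> bool" where
  "strongly_prefers r S' S \<longleftrightarrow> (favorite r S', favorite r S) \<in> r"

definition frac_prefer :: "'v set \<Rightarrow> ('v \<Rightarrow> ('c \<times> 'c) set) \<Rightarrow> 'c set \<Rightarrow> 'c set \<Rightarrow> real" where
  "frac_prefer V P S' S = real (card {v \<in> V. strongly_prefers (P v) S' S}) / real (card V)"

definition c_stable :: "'v set \<Rightarrow> 'c set \<Rightarrow> ('v \<Rightarrow> ('c \<times> 'c) set) \<Rightarrow> real \<Rightarrow> 'c set \<Rightarrow> bool" where
  "c_stable V C P c S \<longleftrightarrow>
     (\<forall>S'. committee C S' \<longrightarrow> frac_prefer V P S' S < c * real (card S') / real (card S))"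

definition undominated :: "'v set \<Rightarrow> 'c set \<Rightarrow> ('v \<Rightarrow> ('c \<times> 'c) set) \<Rightarrow> real \<Rightarrow> 'c set \<Rightarrow> bool" where
  "undominated V C P \<alpha> S \<longleftrightarrow> (\<forall>a\<in>C. frac_prefer V P {a} S < \<alpha>)"

end

theory Submission
  imports Defs
begin

lemma max_exists:
  assumes "finite S" "S \<noteq> {}" "S \<subseteq> C" "strict_linear_order_on C r"
  shows "\<exists>a\<in>S. \<forall>b\<in>S. b \<noteq> a \<longrightarrow> (a, b) \<in> r"
  using assms
proof (induction S rule: finite_ne_induct)
  case (singleton x)
  then show ?case by auto
next
  case (insert x F)
  then obtain a where a: "a \<in> F" "\<forall>b\<in>F. b \<noteq> a \<longrightarrow> (a, b) \<in> r" by auto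
  have tot: "total_on C r" and tr: "trans r" using insert.prems
    by (auto simp: strict_linear_order_on_def)
  have "x \<noteq> a" using a insert by auto
  then have "(x, a) \<in> r \<or> (a, x) \<in> r" using tot insert a
    by (auto simp: total_on_def)
  then show ?case
  proof
    assume "(x, a) \<in> r"
    then have "\<forall>b\<in>insert x F. b \<noteq> x \<longrightarrow> (x, b) \<in> r"
      using a tr by (auto dest: transD)
    then show ?thesis by blast
  next
    assume "(a, x) \<in> r"
    then have "\<forall>b\<in>insert x F. b \<noteq> a \<longrightarrow> (a, b) \<in> r"
      using a by auto
    then show ?thesis using a by blast
  qed
qed

lemma favorite_in:
  assumes "finite S" "S \<noteq> {}" "S \<subseteq> C" "strict_linear_order_on C r"
  shows "favorite r S \<in> S"
proof -
  obtain a where a: "a \<in> S" "\<forall>b\<in>S. b \<noteq> a \<longrightarrow> (a, b) \<in> r"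
    using max_exists[OF assms] by blast
  have irr: "irrefl r" and tr: "trans r" using assms(4)
    by (auto simp: strict_linear_order_on_def)
  have "favorite r S = a" unfolding favorite_def
  proof (rule the_equality)
    show "a \<in> S \<and> (\<forall>b\<in>S. b \<noteq> a \<longrightarrow> (a, b) \<in> r)" using a by blast
  next
    fix y assume y: "y \<in> S \<and> (\<forall>b\<in>S. b \<noteq> y \<longrightarrow> (y, b) \<in> r)"
    show "y = a"
    proof (rule ccontr)
      assume "y \<noteq> a"
      then have "(y, a) \<in> r" "(a, y) \<in> r" using a y by auto
      then have "(y, y) \<in> r" using tr by (auto dest: transD)
      then show False using irr by (auto simp: irrefl_def)
    qed
  qed
  then show ?thesis using a by simp
qed

lemma favorite_single: "favorite r {a} = a"
  unfolding favorite_def by (rule the_equality) auto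

theorem proposition1:
  fixes V :: "'v set" and C :: "'c set" and P :: "'v \<Rightarrow> ('c \<times> 'c) set"
    and k :: nat and c :: real and S :: "'c set"
  assumes "election V C P"
    and "k > 0" and "c > 0"
    and "committee C S" and "card S = k"
  shows "c_stable V C P c S \<longleftrightarrow> undominated V C P (c / real k) S"
proof
  assume "c_stable V C P c S"
  then show "undominated V C P (c / real k) S"
    unfolding c_stable_def undominated_def committee_def using assms(5) by force
next
  assume und: "undominated V C P (c / real k) S"
  have fV: "finite V" and nV: "V \<noteq> {}" and fC: "finite C"
    and ord: "\<And>v. v \<in> V \<Longrightarrow> strict_linear_order_on C (P v)"
    using assms(1) by (auto simp: election_def)
  have cV: "real (card V) > 0" using fV nV by (simp add: card_gt_0_iff)
  show "c_stable V C P c S" unfolding c_stable_def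
  proof (intro allI impI)
    fix S' assume cS': "committee C S'"
    have fS': "finite S'" using cS' fC by (auto simp: committee_def intro: finite_subset)
    have ne: "S' \<noteq> {}" using cS' by (auto simp: committee_def)
    have sub: "{v \<in> V. strongly_prefers (P v) S' S}
        \<subseteq> (\<Union>a\<in>S'. {v \<in> V. strongly_prefers (P v) {a} S})"
    proof
      fix v assume v: "v \<in> {v \<in> V. strongly_prefers (P v) S' S}"
      have "favorite (P v) S' \<in> S'"
        using favorite_in[OF fS' ne _ ord] cS' v by (auto simp: committee_def)
      then show "v \<in> (\<Union>a\<in>S'. {v \<in> V. strongly_prefers (P v) {a} S})"
        using v by (auto simp: strongly_prefers_def favorite_single)
    qed
    have "real (card {v \<in> V. strongly_prefers (P v) S' S})
        \<le> real (card (\<Union>a\<in>S'. {v \<in> V. strongly_prefers (P v) {a} S}))"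
      using sub fV fS' by (intro of_nat_mono card_mono) auto
    also have "\<dots> \<le> real (\<Sum>a\<in>S'. card {v \<in> V. strongly_prefers (P v) {a} S})"
      by (intro of_nat_mono card_UN_le fS')
    also have "\<dots> = (\<Sum>a\<in>S'. real (card {v \<in> V. strongly_prefers (P v) {a} S}))"
      by simp
    also have "\<dots> < (\<Sum>a\<in>S'. c / real k * real (card V))"
    proof (rule sum_strict_mono[OF fS' ne])
      fix a assume "a \<in> S'"
      then have "a \<in> C" using cS' by (auto simp: committee_def)
      then have "frac_prefer V P {a} S < c / real k" using und by (auto simp: undominated_def)
      then show "real (card {v \<in> V. strongly_prefers (P v) {a} S}) < c / real k * real (card V)"
        using cV by (simp add: frac_prefer_def divide_less_eq)
    qed
    also have "\<dots> = c * real (card S') / real k * real (card V)" by simp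
    finally show "frac_prefer V P S' S < c * real (card S') / real (card S)"
      using cV assms(5) by (simp add: frac_prefer_def divide_less_eq)
  qed
qed

end
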